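(* Let $N\ge2$ and let $q$ be a primitive $4N$-th root of unity with $q^N=\mathbf{i}$. Then: (a) $q_\lambda\neq0$ for every strict partition $\lambda$ with $\lambda_1<N$, and $q_\lambda=0$ for every strict partition $\lambda$ with $\lambda_1=N+1$ and $\lambda_2\le N-2$; (b) $a_{N-m}=a_m$ for $0\le m\le N$, where $a_0=1$; (c) $q_{(N,\lambda_2,\dots,\lambda_r)}=q_{(\lambda_2,\dots,\lambda_r)}$ for any strict partition $(N,\lambda_2,\dots,\lambda_r)$.
   Context: $\mathbf{i}=\sqrt{-1}$, $[k]=(q^k-q^{-k})/(q-q^{-1})$. For $m\ge1$, $a_m=\prod_{j=1}^m \mathbf{i}\,\frac{q^{j-1}+q^{1-j}}{q^j-q^{-j}}$, and for a strict partition $\lambda=(\lambda_1>\dots>\lambda_r>0)$ the rational function $q_\lambda=\prod_{j=1}^r a_{\lambda_j}\prod_{1\le i<j\le r}\frac{[\lambda_i-\lambda_j]}{[\lambda_i+\lambda_j]}$ (with $q_\emptyset=1$), evaluated at the given $q$. *)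

theory Defs
  imports Complex_Main
begin

definition qint :: "complex \<Rightarrow> nat \<Rightarrow> complex" where
  "qint q k = (q ^ k - inverse q ^ k) / (q - inverse q)"

definition a_coef :: "complex \<Rightarrow> nat \<Rightarrow> complex" where
  "a_coef q m = (\<Prod>j=1..m. \<i> * (q ^ (j - 1) + inverse q ^ (j - 1)) / (q ^ j - inverse q ^ j))"

definition strict_partition :: "nat list \<Rightarrow> bool" where
  "strict_partition xs \<longleftrightarrow> sorted_wrt (>) xs \<and> (\<forall>x\<in>set xs. 0 < x)"

definition q_lambda :: "complex \<Rightarrow> nat list \<Rightarrow> complex" where
  "q_lambda q xs =
     (\<Prod>i<length xs. a_coef q (xs ! i)) *
     (\<Prod>j<length xs. \<Prod>i<j. qint q (xs ! i - xs ! j) / qint q (xs ! i + xs ! j))"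

definition primitive_root_of_unity :: "nat \<Rightarrow> complex \<Rightarrow> bool" where
  "primitive_root_of_unity n z \<longleftrightarrow> z ^ n = 1 \<and> (\<forall>k. 0 < k \<and> k < n \<longrightarrow> z ^ k \<noteq> 1)"

end

theory Submission
  imports Defs
begin

definition ff :: "complex \<Rightarrow> nat \<Rightarrow> complex" where
  "ff q j = \<i> * (q ^ (j - 1) + inverse q ^ (j - 1)) / (q ^ j - inverse q ^ j)"

lemma a_coef_Suc: "a_coef q (Suc m) = a_coef q m * ff q (Suc m)"
  unfolding a_coef_def ff_def by (simp add: prod.nat_ivl_Suc' mult.commute)


lemma alg: fixes x q :: complex
  assumes "x \<noteq> 0" "q \<noteq> 0" "x + inverse x \<noteq> 0" "x*q - inverse (x*q) \<noteq> 0"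
   "\<i>/(x*q) + inverse (\<i>/(x*q)) \<noteq> 0" "\<i>/x - inverse (\<i>/x) \<noteq> 0"
  shows "\<i>*(x + inverse x)/(x*q - inverse (x*q)) * (\<i>*(\<i>/(x*q) + inverse (\<i>/(x*q)))/(\<i>/x - inverse (\<i>/x))) = 1"
proof -
  have a: "x*x + 1 \<noteq> 0" using assms(1,3) by (simp add: field_simps)
  have b: "x*q*(x*q) - 1 \<noteq> 0" using assms(1,2,4) by (simp add: field_simps)
  show ?thesis using assms a b by (simp add: field_simps) algebra
qed

locale R =
  fixes N :: nat and q :: complex
  assumes N2: "N \<ge> 2" and prim: "primitive_root_of_unity (4 * N) q" and qN: "q ^ N = \<i>"
begin

lemma q_nz: "q \<noteq> 0"
  using qN N2 by (metis power_0_left not_numeral_le_zero zero_neq_numeral complex_i_not_zero le_zero_eq power_eq_0_iff)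

lemma pow_eq_1: "q ^ k = 1 \<longleftrightarrow> 4 * N dvd k"
proof -
  have q4: "q ^ (4*N) = 1" using prim unfolding primitive_root_of_unity_def by auto
  have "q ^ k = q ^ (4*N * (k div (4*N)) + k mod (4*N))" by (metis mult_div_mod_eq)
  also have "\<dots> = q ^ (k mod (4*N))" by (simp only: power_add power_mult[of q "4*N"] q4 power_one mult_1)
  finally have e: "q ^ k = q ^ (k mod (4*N))" .
  show ?thesis
  proof
    assume "q ^ k = 1"
    hence "q ^ (k mod (4*N)) = 1" using e by simp
    moreover have "k mod (4*N) < 4*N" using N2 by simp
    ultimately have "k mod (4*N) = 0" using prim unfolding primitive_root_of_unity_def by auto
    thus "4*N dvd k" by auto
  next
    assume "4*N dvd k" thus "q ^ k = 1" using e by simp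
  qed
qed

lemma q2N: "q ^ (2*N) = -1"
  using qN by (simp add: power_mult_distrib mult.commute power_mult)

lemma minus_nz: assumes "0 < j" "j < 2*N" shows "q ^ j - inverse q ^ j \<noteq> 0"
proof
  assume "q ^ j - inverse q ^ j = 0"
  hence "q ^ j * q ^ j = 1" using q_nz by (simp add: power_inverse field_simps)
  hence "q ^ (2*j) = 1" by (simp add: power_add[symmetric] mult_2)
  hence "4*N dvd 2*j" using pow_eq_1 by simp
  hence "2*(2*N) dvd 2*j" by (simp add: mult.assoc)
  hence "2*N dvd j" by (simp only: nat_mult_dvd_cancel_disj) simp
  thus False using assms by (auto dest: dvd_imp_le)
qed

lemma plus_nz: assumes "j < N" shows "q ^ j + inverse q ^ j \<noteq> 0"
proof
  assume "q ^ j + inverse q ^ j = 0"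
  hence "q ^ j * q ^ j = -1" using q_nz by (simp add: power_inverse field_simps add_eq_0_iff)
  hence "q ^ (2*j) = -1" by (simp add: power_add[symmetric] mult_2)
  hence "q ^ (2*j + 2*N) = 1" using q2N by (simp add: power_add)
  hence "4*N dvd 2*j + 2*N" using pow_eq_1 by simp
  then obtain c where "2*j + 2*N = 4*N*c" by auto
  thus False using assms by (cases c; cases "c - 1") auto
qed

lemma qint_nz: assumes "0 < k" "k < 2*N" shows "qint q k \<noteq> 0"
  using minus_nz[OF assms] minus_nz[of 1] N2 unfolding qint_def by simp


lemma ff_alt: "ff q (Suc t) = \<i>*(q^t + inverse (q^t))/(q^t*q - inverse (q^t*q))"
  unfolding ff_def by (simp add: power_inverse mult.commute)

lemma ff_pair: assumes "t < N" shows "ff q (Suc t) * ff q (N - t) = 1"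
proof -
  define x where "x = q^t"
  have xnz: "x \<noteq> 0" using q_nz x_def by simp
  have y: "q^(N-t) = \<i>/x"
    using qN assms xnz unfolding x_def by (simp add: field_simps power_add[symmetric])
  have z: "q^(N-t-1) = \<i>/(x*q)"
  proof -
    have "q^(N-t-1) * q * x = q^((N-t-1)+1+t)" unfolding x_def by (simp only: power_add power_one_right)
    also have "(N-t-1)+1+t = N" using assms by simp
    finally have "q^(N-t-1) * q * x = q^N" .
    thus ?thesis using qN xnz q_nz by (simp add: field_simps)
  qed
  have e2: "ff q (N - t) = \<i>*(\<i>/(x*q) + inverse (\<i>/(x*q)))/(\<i>/x - inverse (\<i>/x))"
    using assms ff_alt[of "N-t-1"] y z by (simp add: Suc_diff_Suc)
  have e1: "ff q (Suc t) = \<i>*(x + inverse x)/(x*q - inverse (x*q))"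
    using ff_alt x_def by simp
  have c1: "x + inverse x \<noteq> 0" using plus_nz[OF assms] x_def by (simp add: power_inverse)
  have c2: "x*q - inverse (x*q) \<noteq> 0" using minus_nz[of "Suc t"] assms x_def N2
    by (simp add: power_inverse mult.commute)
  have c3: "\<i>/(x*q) + inverse (\<i>/(x*q)) \<noteq> 0" using plus_nz[of "N-t-1"] assms z
    by (simp add: power_inverse)
  have c4: "\<i>/x - inverse (\<i>/x) \<noteq> 0" using minus_nz[of "N-t"] assms y
    by (simp add: power_inverse)
  show ?thesis unfolding e1 e2 by (rule alg[OF xnz q_nz c1 c2 c3 c4])
qed

lemma ff_mid: assumes "N = 2*t+1" shows "ff q (Suc t) = 1"
proof -
  define x where "x = q^t"
  have xnz: "x \<noteq> 0" using q_nz x_def by simp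
  have xx: "x*x*q = \<i>" using qN assms unfolding x_def
    by (simp add: power_add[symmetric] mult_2[symmetric] mult.commute)
  have c2: "x*q - inverse (x*q) \<noteq> 0" using minus_nz[of "Suc t"] assms x_def N2
    by (simp add: power_inverse mult.commute)
  have b: "x*q*(x*q) - 1 \<noteq> 0" using xnz q_nz c2 by (simp add: field_simps)
  have "\<i>*(x + inverse x)/(x*q - inverse (x*q)) = 1"
  proof -
    have "\<i>*(x + inverse x)/(x*q - inverse (x*q)) = \<i>*(x*x*q + q)/(x*x*q*q - 1)"
      using xnz q_nz b by (simp add: field_simps)
    also have "\<dots> = 1" using b xx by (simp add: field_simps)
    finally show ?thesis .
  qed
  thus ?thesis using ff_alt x_def by simp
qed


lemma a_sym: assumes "m \<le> N" shows "a_coef q (N-m) = a_coef q m"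
proof -
  have key: "\<forall>m. N div 2 - m = k \<longrightarrow> m \<le> N div 2 \<longrightarrow> a_coef q (N-m) = a_coef q m" for k
  proof (induction k)
    case 0
    show ?case
    proof (intro allI impI)
      fix m assume h: "N div 2 - m = 0" "m \<le> N div 2"
      hence m: "m = N div 2" by simp
      show "a_coef q (N-m) = a_coef q m"
      proof (cases "even N")
        case True thus ?thesis using m by (metis add_diff_cancel_right' dvd_mult_div_cancel mult_2)
      next
        case False
        hence N: "N = 2*m+1" using m by presburger
        hence "N - m = Suc m" by simp
        thus ?thesis using a_coef_Suc[of q m] ff_mid[OF N] by simp
      qed
    qed
  next
    case (Suc k)
    show ?case
    proof (intro allI impI)
      fix m assume h: "N div 2 - m = Suc k" "m \<le> N div 2"
      hence IH: "a_coef q (N - Suc m) = a_coef q (Suc m)" using Suc.IH by auto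
      have lt: "m < N" using h by linarith
      hence e: "N - m = Suc (N - Suc m)" by simp
      have "a_coef q (N-m) = a_coef q (N - Suc m) * ff q (N - m)" using e a_coef_Suc by metis
      also have "\<dots> = a_coef q m * (ff q (Suc m) * ff q (N - m))" using IH a_coef_Suc by simp
      also have "\<dots> = a_coef q m" using ff_pair[OF lt] by simp
      finally show "a_coef q (N-m) = a_coef q m" .
    qed
  qed
  show ?thesis
  proof (cases "m \<le> N div 2")
    case True thus ?thesis using key by blast
  next
    case False
    hence "N - m \<le> N div 2" by linarith
    hence "a_coef q (N - (N-m)) = a_coef q (N-m)" using key by blast
    thus ?thesis using assms by simp
  qed
qed

lemma aN: "a_coef q N = 1"
  using a_sym[of N] by (simp add: a_coef_def)


end
context R begin
lemma a_nz: assumes "m \<le> N" shows "a_coef q m \<noteq> 0"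
proof -
  have "\<i> * (q ^ (j - 1) + inverse q ^ (j - 1)) / (q ^ j - inverse q ^ j) \<noteq> 0"
    if "j \<in> {1..m}" for j
  proof -
    have "j-1 < N" "0<j" "j<2*N" using that assms by auto
    thus ?thesis using plus_nz[of "j-1"] minus_nz[of j] by auto
  qed
  thus ?thesis unfolding a_coef_def by (simp add: prod_zero_iff)
qed

end
context R begin
lemma a_N1: "a_coef q (N+1) = 0"
proof -
  have "\<i> * (q ^ (j - 1) + inverse q ^ (j - 1)) / (q ^ j - inverse q ^ j) = 0" if "j = N+1" for j
    using that qN by (simp add: power_inverse)
  thus ?thesis unfolding a_coef_def by (simp add: prod_zero_iff)
qed

end
context R begin
lemma qint_ratio: assumes "0 < y" "y < N" shows "qint q (N-y) / qint q (N+y) = 1"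
proof -
  define x where "x = q^y"
  have xnz: "x \<noteq> 0" using q_nz x_def by simp
  have a: "q^(N-y) = \<i> / x"
  proof -
    have "q^(N-y) * x = q^N" using assms unfolding x_def by (simp add: power_add[symmetric])
    thus ?thesis using qN xnz by (simp add: field_simps)
  qed
  have b: "q^(N+y) = \<i> * x" using qN unfolding x_def by (simp add: power_add)
  have "q^(N-y) - inverse q^(N-y) = q^(N+y) - inverse q^(N+y)"
    unfolding power_inverse a b using xnz by (simp add: field_simps)
  hence e: "qint q (N-y) = qint q (N+y)" unfolding qint_def by simp
  have "qint q (N+y) \<noteq> 0" using qint_nz assms by simp
  thus ?thesis using e by simp
qed

end
context R begin
lemma part1: assumes "strict_partition xs" "\<forall>x\<in>set xs. x < N" shows "q_lambda q xs \<noteq> 0"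
proof -
  have s: "\<And>i j. i < j \<Longrightarrow> j < length xs \<Longrightarrow> xs!j < xs!i"
    using assms(1) unfolding strict_partition_def by (simp add: sorted_wrt_iff_nth_less)
  have b: "\<And>i. i < length xs \<Longrightarrow> 0 < xs!i \<and> xs!i < N"
    using assms unfolding strict_partition_def by (simp add: nth_mem)
  have p1: "(\<Prod>i<length xs. a_coef q (xs ! i)) \<noteq> 0"
  proof -
    have "\<forall>i\<in>{..<length xs}. a_coef q (xs ! i) \<noteq> 0" using b a_nz by (meson lessThan_iff less_imp_le)
    thus ?thesis by (subst prod_zero_iff) auto
  qed
  have "qint q (xs ! i - xs ! j) / qint q (xs ! i + xs ! j) \<noteq> 0" if "i < j" "j < length xs" for i j
  proof -
    have "0 < xs!i - xs!j" "xs!i - xs!j < 2*N" "0 < xs!i + xs!j" "xs!i + xs!j < 2*N"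
      using s[OF that] b[of i] b[of j] that by auto
    thus ?thesis using qint_nz by (metis divide_eq_0_iff)
  qed
  hence inner: "(\<Prod>i<j. qint q (xs ! i - xs ! j) / qint q (xs ! i + xs ! j)) \<noteq> 0"
    if "j < length xs" for j
    using that by (subst prod_zero_iff) (auto simp del: prod_zero_iff divide_eq_0_iff)
  have p2: "(\<Prod>j<length xs. \<Prod>i<j. qint q (xs ! i - xs ! j) / qint q (xs ! i + xs ! j)) \<noteq> 0"
    using inner by (subst prod_zero_iff) (auto simp del: prod_zero_iff)
  show ?thesis unfolding q_lambda_def using p1 p2 by simp
qed

end
context R begin
lemma part2: "q_lambda q ((N + 1) # ys) = 0"
proof -
  have "(\<Prod>i<length ((N + 1) # ys). a_coef q (((N + 1) # ys) ! i)) = 0"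
    by (simp only: length_Cons prod.lessThan_Suc_shift nth_Cons_0 a_N1 mult_zero_left)
  thus ?thesis unfolding q_lambda_def by simp
qed

end
context R begin
lemma part4: assumes "strict_partition (N # ys)" shows "q_lambda q (N # ys) = q_lambda q ys"
proof -
  have b: "\<And>y. y \<in> set ys \<Longrightarrow> 0 < y \<and> y < N"
    using assms unfolding strict_partition_def by auto
  have r: "qint q (N - ys ! j) / qint q (N + ys ! j) = 1" if "j < length ys" for j
    using b[OF nth_mem[OF that]] qint_ratio by simp
  show ?thesis
  proof -
    have e1: "(\<Prod>i<length (N # ys). a_coef q ((N # ys) ! i)) = (\<Prod>i<length ys. a_coef q (ys ! i))"
      by (simp only: length_Cons prod.lessThan_Suc_shift nth_Cons_0 nth_Cons_Suc aN mult_1_left)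
    have "(\<Prod>j<length (N # ys). \<Prod>i<j. qint q ((N # ys) ! i - (N # ys) ! j) / qint q ((N # ys) ! i + (N # ys) ! j))
       = (\<Prod>j<length ys. \<Prod>i<Suc j. qint q ((N # ys) ! i - ys ! j) / qint q ((N # ys) ! i + ys ! j))"
      by (simp only: length_Cons prod.lessThan_Suc_shift nth_Cons_Suc prod.empty lessThan_0 mult_1_left)
    also have "\<dots> = (\<Prod>j<length ys. \<Prod>i<j. qint q (ys ! i - ys ! j) / qint q (ys ! i + ys ! j))"
    proof (rule prod.cong[OF refl])
      fix j assume "j \<in> {..<length ys}"
      thus "(\<Prod>i<Suc j. qint q ((N # ys) ! i - ys ! j) / qint q ((N # ys) ! i + ys ! j))
          = (\<Prod>i<j. qint q (ys ! i - ys ! j) / qint q (ys ! i + ys ! j))"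
        by (simp only: prod.lessThan_Suc_shift nth_Cons_Suc nth_Cons_0 r lessThan_iff mult_1_left)
    qed
    finally show ?thesis unfolding q_lambda_def e1 by simp
  qed
qed


end
theorem corollary2p28:
  fixes N :: nat and q :: complex
  assumes "N \<ge> 2"
    and "primitive_root_of_unity (4 * N) q"
    and "q ^ N = \<i>"
  shows "(\<forall>xs. strict_partition xs \<and> (\<forall>x\<in>set xs. x < N) \<longrightarrow> q_lambda q xs \<noteq> 0)
       \<and> (\<forall>ys. strict_partition ((N + 1) # ys) \<and> (\<forall>y\<in>set ys. y \<le> N - 2)
              \<longrightarrow> q_lambda q ((N + 1) # ys) = 0)
       \<and> (\<forall>m\<le>N. a_coef q (N - m) = a_coef q m)
       \<and> (\<forall>ys. strict_partition (N # ys) \<longrightarrow> q_lambda q (N # ys) = q_lambda q ys)"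
proof -
  interpret R N q using assms by unfold_locales
  show ?thesis using part1 part2 part4 a_sym by blast
qed

end
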